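(* Let $p\colon X\to B$ be a Boolean set. For $e,f\in B$ let $e\setminus f$ denote the relative complement of $e\wedge f$ in the interval $[0,e]$. For $x,y\in X$ define $$x\circ y=y|^{p(y)}_{p(x)\wedge p(y)},\qquad y\setminus x=y|^{p(y)}_{p(y)\setminus p(x)},\qquad x\bullet y=x\vee(y\setminus x)$$ (the join being taken in $(X,\le)$; it exists). Then $(X,\circ,\bullet)$ is a right-hand skew Boolean algebra.
   Context: Convention: a "Boolean algebra" means a generalized Boolean algebra (relatively complemented distributive lattice with $0$, top not required). Presheaf of sets over a meet semilattice $E$: pairwise disjoint sets $X_e$ ($e\in E$), restriction maps $x\mapsto x|^e_f$, $X_e\to X_f$ for $e\ge f$, with $|^e_e=\mathrm{id}$ and $(x|^e_f)|^f_g=x|^e_g$; $X=\bigcup X_e$, $p(x)=e$ iff $x\in X_e$; global support means all $X_e\ne\emptyset$. Order: $x\le y$ iff $p(x)\le p(y)$ and $x=y|^{p(y)}_{p(x)}$. Compatibility: $x\sim y$ iff $x\wedge y$ exists in $(X,\le)$ and $p(x\wedge y)=p(x)\wedge p(y)$. A Boolean set is a presheaf of sets $p\colon X\to B$ with global support over a Boolean algebra $B$ such that $(X,\le)$ has a least element $0$, every compatible pair has a join in $(X,\le)$, and $p(x)=0$ implies $x=0$. A right-hand skew Boolean algebra is $(B,\circ,\bullet)$ where $(B,\circ)$, $(B,\bullet)$ are bands such that: (SB1) $x\circ(x\bullet y)=x=(y\bullet x)\circ x$ and $x\bullet(x\circ y)=x=(y\circ x)\bullet x$; (SB2) $x\circ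 y\circ x=y\circ x$ and $x\bullet y\bullet x=x\bullet y$; (SB3) $x\bullet y=y\bullet x$ iff $x\circ y=y\circ x$; (SB4) there is $0$ with $0\circ x=0=x\circ 0$; (SB5) each $x^{\downarrow}=\{x\circ s\circ x:s\in B\}$ is a Boolean algebra with top element. *)

theory Defs
  imports Main
begin

unbundle lattice_syntax

text \<open>A generalized Boolean algebra is a relatively complemented distributive lattice
  with 0. We take the carrier to be a type of class distrib_lattice and
  bounded_lattice_bot, and require relative complements in every interval [0,e]
  (equivalent, in a distributive lattice with 0, to relative complementedness).\<close>

definition gen_boolean_algebra :: "'b::{distrib_lattice,bounded_lattice_bot} itself \<Rightarrow> bool" where
  "gen_boolean_algebra _ \<longleftrightarrow>
     (\<forall>e f :: 'b. f \<le> e \<longrightarrow> (\<exists>g. f \<sqinter> g = bot \<and> f \<squnion> g = e))"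

definition rdiff :: "'b::{distrib_lattice,bounded_lattice_bot} \<Rightarrow> 'b \<Rightarrow> 'b" where
  "rdiff e f = (THE g. (e \<sqinter> f) \<sqinter> g = bot \<and> (e \<sqinter> f) \<squnion> g = e)"

text \<open>The total set X is the type 'x, p x is the support of x, and
  res x f stands for x|^{p x}_f (only meaningful for f \<le> p x).
  Disjointness of the fibres X_e is automatic since p is a function.\<close>

definition presheaf :: "('x \<Rightarrow> 'b::semilattice_inf) \<Rightarrow> ('x \<Rightarrow> 'b \<Rightarrow> 'x) \<Rightarrow> bool" where
  "presheaf p res \<longleftrightarrow>
     (\<forall>x f. f \<le> p x \<longrightarrow> p (res x f) = f) \<and>
     (\<forall>x. res x (p x) = x) \<and>
     (\<forall>x f g. g \<le> f \<and> f \<le> p x \<longrightarrow> res (res x f) g = res x g)"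

definition psle :: "('x \<Rightarrow> 'b::semilattice_inf) \<Rightarrow> ('x \<Rightarrow> 'b \<Rightarrow> 'x) \<Rightarrow> 'x \<Rightarrow> 'x \<Rightarrow> bool" where
  "psle p res x y \<longleftrightarrow> p x \<le> p y \<and> x = res y (p x)"

definition is_glb_ps :: "('x \<Rightarrow> 'b::semilattice_inf) \<Rightarrow> ('x \<Rightarrow> 'b \<Rightarrow> 'x) \<Rightarrow> 'x \<Rightarrow> 'x \<Rightarrow> 'x \<Rightarrow> bool" where
  "is_glb_ps p res x y z \<longleftrightarrow> psle p res z x \<and> psle p res z y \<and>
     (\<forall>w. psle p res w x \<and> psle p res w y \<longrightarrow> psle p res w z)"

definition is_lub_ps :: "('x \<Rightarrow> 'b::semilattice_inf) \<Rightarrow> ('x \<Rightarrow> 'b \<Rightarrow> 'x) \<Rightarrow> 'x \<Rightarrow> 'x \<Rightarrow> 'x \<Rightarrow> bool" where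
  "is_lub_ps p res x y z \<longleftrightarrow> psle p res x z \<and> psle p res y z \<and>
     (\<forall>w. psle p res x w \<and> psle p res y w \<longrightarrow> psle p res z w)"

definition compat :: "('x \<Rightarrow> 'b::semilattice_inf) \<Rightarrow> ('x \<Rightarrow> 'b \<Rightarrow> 'x) \<Rightarrow> 'x \<Rightarrow> 'x \<Rightarrow> bool" where
  "compat p res x y \<longleftrightarrow> (\<exists>z. is_glb_ps p res x y z \<and> p z = p x \<sqinter> p y)"

definition boolean_set ::
  "('x \<Rightarrow> 'b::{distrib_lattice,bounded_lattice_bot}) \<Rightarrow> ('x \<Rightarrow> 'b \<Rightarrow> 'x) \<Rightarrow> bool" where
  "boolean_set p res \<longleftrightarrow>
     gen_boolean_algebra TYPE('b) \<and>
     presheaf p res \<and>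
     surj p \<and>
     (\<exists>z. \<forall>x. psle p res z x) \<and>
     (\<forall>x y. compat p res x y \<longrightarrow> (\<exists>z. is_lub_ps p res x y z)) \<and>
     (\<forall>x. p x = bot \<longrightarrow> (\<forall>y. psle p res x y))"

definition bs_circ :: "('x \<Rightarrow> 'b::{distrib_lattice,bounded_lattice_bot}) \<Rightarrow> ('x \<Rightarrow> 'b \<Rightarrow> 'x) \<Rightarrow> 'x \<Rightarrow> 'x \<Rightarrow> 'x" where
  "bs_circ p res x y = res y (p x \<sqinter> p y)"

definition bs_minus :: "('x \<Rightarrow> 'b::{distrib_lattice,bounded_lattice_bot}) \<Rightarrow> ('x \<Rightarrow> 'b \<Rightarrow> 'x) \<Rightarrow> 'x \<Rightarrow> 'x \<Rightarrow> 'x" where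
  "bs_minus p res y x = res y (rdiff (p y) (p x))"

definition bs_bullet :: "('x \<Rightarrow> 'b::{distrib_lattice,bounded_lattice_bot}) \<Rightarrow> ('x \<Rightarrow> 'b \<Rightarrow> 'x) \<Rightarrow> 'x \<Rightarrow> 'x \<Rightarrow> 'x" where
  "bs_bullet p res x y = (THE z. is_lub_ps p res x (bs_minus p res y x) z)"

definition band :: "('a \<Rightarrow> 'a \<Rightarrow> 'a) \<Rightarrow> bool" where
  "band m \<longleftrightarrow> (\<forall>x y z. m (m x y) z = m x (m y z)) \<and> (\<forall>x. m x x = x)"

definition boolean_algebra_on :: "'a set \<Rightarrow> ('a \<Rightarrow> 'a \<Rightarrow> 'a) \<Rightarrow> ('a \<Rightarrow> 'a \<Rightarrow> 'a) \<Rightarrow> bool" where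
  "boolean_algebra_on S m j \<longleftrightarrow>
     (\<forall>a\<in>S. \<forall>b\<in>S. m a b \<in> S \<and> j a b \<in> S) \<and>
     (\<forall>a\<in>S. \<forall>b\<in>S. m a b = m b a \<and> j a b = j b a) \<and>
     (\<forall>a\<in>S. \<forall>b\<in>S. \<forall>c\<in>S. m (m a b) c = m a (m b c) \<and> j (j a b) c = j a (j b c)) \<and>
     (\<forall>a\<in>S. m a a = a \<and> j a a = a) \<and>
     (\<forall>a\<in>S. \<forall>b\<in>S. m a (j a b) = a \<and> j a (m a b) = a) \<and>
     (\<forall>a\<in>S. \<forall>b\<in>S. \<forall>c\<in>S. m a (j b c) = j (m a b) (m a c)) \<and>
     (\<exists>z\<in>S. \<exists>t\<in>S. (\<forall>a\<in>S. m z a = z \<and> m t a = a) \<and>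
        (\<forall>a\<in>S. \<exists>c\<in>S. m a c = z \<and> j a c = t))"

definition rh_skew_boolean_algebra :: "('a \<Rightarrow> 'a \<Rightarrow> 'a) \<Rightarrow> ('a \<Rightarrow> 'a \<Rightarrow> 'a) \<Rightarrow> bool" where
  "rh_skew_boolean_algebra c b \<longleftrightarrow>
     band c \<and> band b \<and>
     (\<forall>x y. c x (b x y) = x \<and> c (b y x) x = x \<and> b x (c x y) = x \<and> b (c y x) x = x) \<and>
     (\<forall>x y. c (c x y) x = c y x \<and> b (b x y) x = b x y) \<and>
     (\<forall>x y. b x y = b y x \<longleftrightarrow> c x y = c y x) \<and>
     (\<exists>z. \<forall>x. c z x = z \<and> c x z = z) \<and>
     (\<forall>x. boolean_algebra_on {c (c x s) x | s. True} c b)"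

end

theory Submission
  imports Defs
begin

lemma ba_interval:
  fixes t :: "'c::{distrib_lattice,bounded_lattice_bot}"
  assumes hm: "\<And>e f. e \<le> t \<Longrightarrow> f \<le> t \<Longrightarrow> m (\<phi> e) (\<phi> f) = \<phi> (e \<sqinter> f)"
    and hj: "\<And>e f. e \<le> t \<Longrightarrow> f \<le> t \<Longrightarrow> j (\<phi> e) (\<phi> f) = \<phi> (e \<squnion> f)"
    and hc: "\<And>e. e \<le> t \<Longrightarrow> \<exists>g\<le>t. e \<sqinter> g = bot \<and> e \<squnion> g = t"
  shows "boolean_algebra_on (\<phi> ` {e. e \<le> t}) m j"
  unfolding boolean_algebra_on_def
proof (intro conjI)
  show "\<forall>a\<in>\<phi> ` {e. e \<le> t}. \<forall>b\<in>\<phi> ` {e. e \<le> t}. m a b \<in> \<phi> ` {e. e \<le> t} \<and> j a b \<in> \<phi> ` {e. e \<le> t}"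
    by (auto simp: hm hj intro!: imageI le_infI1)
  show "\<forall>a\<in>\<phi> ` {e. e \<le> t}. \<forall>b\<in>\<phi> ` {e. e \<le> t}. m a b = m b a \<and> j a b = j b a"
    by (auto simp: hm hj inf_commute sup_commute)
  show "\<forall>a\<in>\<phi> ` {e. e \<le> t}. \<forall>b\<in>\<phi> ` {e. e \<le> t}. \<forall>c\<in>\<phi> ` {e. e \<le> t}.
     m (m a b) c = m a (m b c) \<and> j (j a b) c = j a (j b c)"
    by (auto simp: hm hj inf_assoc sup_assoc le_infI1)
  show "\<forall>a\<in>\<phi> ` {e. e \<le> t}. m a a = a \<and> j a a = a"
    by (auto simp: hm hj)
  show "\<forall>a\<in>\<phi> ` {e. e \<le> t}. \<forall>b\<in>\<phi> ` {e. e \<le> t}. m a (j a b) = a \<and> j a (m a b) = a"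
    by (auto simp: hm hj le_infI1)
  show "\<forall>a\<in>\<phi> ` {e. e \<le> t}. \<forall>b\<in>\<phi> ` {e. e \<le> t}. \<forall>c\<in>\<phi> ` {e. e \<le> t}. m a (j b c) = j (m a b) (m a c)"
    by (auto simp: hm hj le_infI1 inf_sup_distrib1)
  show "\<exists>z\<in>\<phi> ` {e. e \<le> t}. \<exists>ta\<in>\<phi> ` {e. e \<le> t}. (\<forall>a\<in>\<phi> ` {e. e \<le> t}. m z a = z \<and> m ta a = a) \<and>
     (\<forall>a\<in>\<phi> ` {e. e \<le> t}. \<exists>c\<in>\<phi> ` {e. e \<le> t}. m a c = z \<and> j a c = ta)"
  proof -
    have Z: "\<phi> bot \<in> \<phi> ` {e. e \<le> t}" and T: "\<phi> t \<in> \<phi> ` {e. e \<le> t}" by auto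
    have A: "\<forall>a\<in>\<phi> ` {e. e \<le> t}. m (\<phi> bot) a = \<phi> bot \<and> m (\<phi> t) a = a"
      by (auto simp: hm inf_absorb2)
    have C: "\<forall>a\<in>\<phi> ` {e. e \<le> t}. \<exists>c\<in>\<phi> ` {e. e \<le> t}. m a c = \<phi> bot \<and> j a c = \<phi> t"
    proof
      fix a assume "a \<in> \<phi> ` {e. e \<le> t}"
      then obtain e where e: "e \<le> t" "a = \<phi> e" by blast
      obtain g where g: "g \<le> t" "e \<sqinter> g = bot" "e \<squnion> g = t" using hc[OF e(1)] by blast
      show "\<exists>c\<in>\<phi> ` {e. e \<le> t}. m a c = \<phi> bot \<and> j a c = \<phi> t"
        using g e by (auto simp: hm hj intro!: bexI[of _ "\<phi> g"])
    qed
    show ?thesis using Z T A C by blast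
  qed
qed

locale bs =
  fixes p :: "'x \<Rightarrow> 'b::{distrib_lattice,bounded_lattice_bot}" and res :: "'x \<Rightarrow> 'b \<Rightarrow> 'x"
  assumes B: "boolean_set p res"
begin

lemma Bs: "gen_boolean_algebra TYPE('b)" "presheaf p res" "surj p"
   "\<forall>x y. compat p res x y \<longrightarrow> (\<exists>z. is_lub_ps p res x y z)"
   "\<forall>x. p x = bot \<longrightarrow> (\<forall>y. psle p res x y)"
  using B unfolding boolean_set_def by auto
lemma R1: "f \<le> p x \<Longrightarrow> p (res x f) = f"
  using Bs(2) unfolding presheaf_def by blast
lemma R2[simp]: "res x (p x) = x"
  using Bs(2) unfolding presheaf_def by blast
lemma R3: "g \<le> f \<Longrightarrow> f \<le> p x \<Longrightarrow> res (res x f) g = res x g"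
  using Bs(2) unfolding presheaf_def by blast
lemma GB: "(f::'b) \<le> e \<Longrightarrow> \<exists>g. f \<sqinter> g = bot \<and> f \<squnion> g = e"
  using Bs(1) unfolding gen_boolean_algebra_def by simp
lemma SU: "surj p"
  using Bs by simp
lemma LUB: "compat p res x y \<Longrightarrow> \<exists>z. is_lub_ps p res x y z"
  using Bs by simp
lemma BOTLE: "p x = bot \<Longrightarrow> psle p res x y"
  using Bs by simp

lemma rd: "((e::'b) \<sqinter> f) \<sqinter> rdiff e f = bot \<and> (e \<sqinter> f) \<squnion> rdiff e f = e"
proof -
  obtain g where g: "(e\<sqinter>f) \<sqinter> g = bot" "(e\<sqinter>f) \<squnion> g = e" using GB[OF inf_le1[of e f]] by blast
  have u: "h = g" if h: "(e\<sqinter>f) \<sqinter> h = bot" "(e\<sqinter>f) \<squnion> h = e" for h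
  proof -
    have "h = h \<sqinter> ((e\<sqinter>f) \<squnion> g)" using h g by (metis inf.absorb_iff1 sup_ge2)
    also have "\<dots> = h \<sqinter> g" using h by (simp add: inf_sup_distrib1 inf_commute)
    finally have 1: "h = h \<sqinter> g" .
    have "g = g \<sqinter> ((e\<sqinter>f) \<squnion> h)" using h g by (metis inf.absorb_iff1 sup_ge2)
    also have "\<dots> = g \<sqinter> h" using g by (simp add: inf_sup_distrib1 inf_commute)
    finally have 2: "g = g \<sqinter> h" .
    show ?thesis using 1 2 by (simp add: inf_commute)
  qed
  have "rdiff e f = g" unfolding rdiff_def by (rule the_equality) (use g u in blast)+
  then show ?thesis using g by simp
qed

lemma rd_le: "rdiff (e::'b) f \<le> e"
proof -
  have "rdiff e f \<le> (e \<sqinter> f) \<squnion> rdiff e f" by simp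
  then show ?thesis using rd[of e f] by simp
qed
lemma rd_disj: "(f::'b) \<sqinter> rdiff e f = bot"
proof -
  have "f \<sqinter> rdiff e f = f \<sqinter> (rdiff e f \<sqinter> e)" using rd_le by (simp add: inf.absorb1)
  also have "\<dots> = (e \<sqinter> f) \<sqinter> rdiff e f" by (simp add: ac_simps)
  finally show ?thesis using rd by simp
qed
lemma rd_disj2: "rdiff (e::'b) f \<sqinter> f = bot"
  using rd_disj by (simp add: inf_commute)
lemma rd_sup: "(a::'b) \<squnion> rdiff b a = a \<squnion> b"
proof (rule antisym)
  show "a \<squnion> rdiff b a \<le> a \<squnion> b" using rd_le[of b a] by (simp add: le_supI2)
  have "b = (b \<sqinter> a) \<squnion> rdiff b a" using rd by simp
  moreover have "b \<sqinter> a \<le> a \<squnion> rdiff b a" by (simp add: le_supI1)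
  moreover have "rdiff b a \<le> a \<squnion> rdiff b a" by simp
  ultimately have "b \<le> a \<squnion> rdiff b a" by (metis le_supI)
  then show "a \<squnion> b \<le> a \<squnion> rdiff b a" by simp
qed
lemma rd_ge: "(e::'b) \<le> b \<Longrightarrow> e \<sqinter> a = bot \<Longrightarrow> e \<le> rdiff b a"
proof -
  assume a: "e \<le> b" "e \<sqinter> a = bot"
  have z: "e \<sqinter> b \<sqinter> a = bot" using a by (simp add: inf.absorb1)
  have "e = e \<sqinter> ((b \<sqinter> a) \<squnion> rdiff b a)" using rd[of b a] a by (simp add: inf.absorb1)
  also have "\<dots> = (e \<sqinter> b \<sqinter> a) \<squnion> (e \<sqinter> rdiff b a)" by (simp add: inf_sup_distrib1 ac_simps)
  also have "\<dots> = e \<sqinter> rdiff b a" using z by simp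
  finally show ?thesis by (rule inf.orderI)
qed


lemma psle_antisym: "psle p res a b \<Longrightarrow> psle p res b a \<Longrightarrow> a = b"
  unfolding psle_def by (metis R2 order_antisym)
lemma psle_res: "f \<le> p x \<Longrightarrow> psle p res (res x f) x"
  unfolding psle_def by (simp add: R1)
lemma psleD: "psle p res a b \<Longrightarrow> a = res b (p a) \<and> p a \<le> p b"
  unfolding psle_def by simp
lemma bot_eq: "p a = bot \<Longrightarrow> p b = bot \<Longrightarrow> a = b"
  using BOTLE psle_antisym by blast
lemma res_bot: "res x bot = res y bot"
  by (rule bot_eq) (simp_all add: R1)

lemma compatI: "res x (p x \<sqinter> p y) = res y (p x \<sqinter> p y) \<Longrightarrow> compat p res x y"
  unfolding compat_def is_glb_ps_def
proof (rule exI[of _ "res x (p x \<sqinter> p y)"], intro conjI allI impI)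
  assume h: "res x (p x \<sqinter> p y) = res y (p x \<sqinter> p y)"
  show "psle p res (res x (p x \<sqinter> p y)) x" by (rule psle_res) simp
  show "psle p res (res x (p x \<sqinter> p y)) y" by (subst h, rule psle_res) simp
  show "p (res x (p x \<sqinter> p y)) = p x \<sqinter> p y" by (simp add: R1)
  fix w assume w: "psle p res w x \<and> psle p res w y"
  then have "p w \<le> p x \<sqinter> p y" unfolding psle_def by simp
  moreover have "w = res x (p w)" using w unfolding psle_def by simp
  ultimately show "psle p res w (res x (p x \<sqinter> p y))"
    unfolding psle_def by (simp add: R1 R3)
qed

lemma compatD: "compat p res x y \<Longrightarrow> res x (p x \<sqinter> p y) = res y (p x \<sqinter> p y)"
  unfolding compat_def is_glb_ps_def psle_def by metis

lemma lub_p: assumes "is_lub_ps p res x y z" shows "p z = p x \<squnion> p y"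
proof -
  have xz: "psle p res x z" and yz: "psle p res y z" using assms unfolding is_lub_ps_def by auto
  then have le: "p x \<squnion> p y \<le> p z" unfolding psle_def by simp
  let ?z = "res z (p x \<squnion> p y)"
  have pz: "p ?z = p x \<squnion> p y" using le R1 by blast
  have "psle p res x ?z" unfolding psle_def using pz xz le unfolding psle_def by (simp add: R3)
  moreover have "psle p res y ?z" unfolding psle_def using pz yz le unfolding psle_def by (simp add: R3)
  ultimately have "psle p res z ?z" using assms unfolding is_lub_ps_def by blast
  then have "p z \<le> p x \<squnion> p y" using pz unfolding psle_def by simp
  then show ?thesis using le by (rule order_antisym)
qed

lemma lub_eq: assumes "is_lub_ps p res a b u" "psle p res a z" "psle p res b z" "p z = p a \<squnion> p b"
  shows "u = z"
proof -
  have "psle p res u z" using assms unfolding is_lub_ps_def by blast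
  moreover have "p u = p z" using lub_p[OF assms(1)] assms(4) by simp
  ultimately show ?thesis unfolding psle_def by simp
qed

lemma EXT: assumes "p z = e1 \<squnion> e2" "p w = e1 \<squnion> e2" "res z e1 = res w e1" "res z e2 = res w e2"
  shows "z = w"
proof -
  have le: "e1 \<le> p z" "e2 \<le> p z" "e1 \<le> p w" "e2 \<le> p w" using assms by auto
  let ?a = "res z e1" and ?b = "res z e2"
  have pa: "p ?a = e1" and pb: "p ?b = e2" using le R1 by auto
  have "res ?a (e1 \<sqinter> e2) = res ?b (e1 \<sqinter> e2)" using le by (simp add: R3)
  then have "compat p res ?a ?b" using compatI pa pb by simp
  then obtain u where u: "is_lub_ps p res ?a ?b u" using LUB by blast
  have a1: "psle p res ?a z" "psle p res ?b z" using le by (auto intro: psle_res)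
  have a2: "psle p res ?a w" "psle p res ?b w" using le psle_res[of e1 w] psle_res[of e2 w] assms(3,4) by auto
  have "u = z" by (rule lub_eq[OF u a1]) (use pa pb assms in simp)
  moreover have "u = w" by (rule lub_eq[OF u a2]) (use pa pb assms in simp)
  ultimately show ?thesis by simp
qed

abbreviation ci where "ci \<equiv> bs_circ p res"
abbreviation bu where "bu \<equiv> bs_bullet p res"

lemma ci_def': "ci x y = res y (p x \<sqinter> p y)"
  by (simp add: bs_circ_def)
lemma pres1[simp]: "p (res y (a \<sqinter> p y)) = a \<sqinter> p y"
  by (simp add: R1)
lemma pres2[simp]: "p (res y (p y \<sqinter> a)) = p y \<sqinter> a"
  by (simp add: R1)
lemma p_ci: "p (ci x y) = p x \<sqinter> p y"
  by (simp add: bs_circ_def R1)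

lemma bul: "p (bu x y) = p x \<squnion> p y \<and> res (bu x y) (p x) = x \<and>
   res (bu x y) (rdiff (p y) (p x)) = res y (rdiff (p y) (p x))"
proof -
  let ?u = "bs_minus p res y x"
  have u: "?u = res y (rdiff (p y) (p x))" by (simp add: bs_minus_def)
  have pu: "p ?u = rdiff (p y) (p x)" using u R1 rd_le by simp
  have "compat p res x ?u" by (rule compatI) (simp add: pu rd_disj res_bot)
  then obtain z where z: "is_lub_ps p res x ?u z" using LUB by blast
  have "bu x y = z" unfolding bs_bullet_def
  proof (rule the_equality[of "is_lub_ps p res x ?u" z, OF z])
    fix z' assume "is_lub_ps p res x ?u z'"
    then show "z' = z" using z unfolding is_lub_ps_def by (blast intro: psle_antisym)
  qed
  moreover have "p z = p x \<squnion> p y" using lub_p[OF z] pu rd_sup by simp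
  moreover have "psle p res x z" "psle p res ?u z" using z unfolding is_lub_ps_def by auto
  ultimately show ?thesis using pu u unfolding psle_def by auto
qed

lemma B1: "e \<le> p x \<Longrightarrow> res (bu x y) e = res x e"
  using bul[of x y] R3[of e "p x" "bu x y"] by simp
lemma B2: "e \<le> p y \<Longrightarrow> e \<sqinter> p x = bot \<Longrightarrow> res (bu x y) e = res y e"
proof -
  assume a: "e \<le> p y" "e \<sqinter> p x = bot"
  have e: "e \<le> rdiff (p y) (p x)" using rd_ge a by blast
  have "res (bu x y) e = res (res (bu x y) (rdiff (p y) (p x))) e"
    by (rule R3[symmetric]) (use e bul[of x y] rd_le[of "p y" "p x"] in \<open>auto intro: le_supI2\<close>)
  also have "\<dots> = res (res y (rdiff (p y) (p x))) e" using bul[of x y] by simp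
  also have "\<dots> = res y e" by (rule R3) (use e rd_le in auto)
  finally show ?thesis .
qed
lemma BCHAR: assumes "p z = p x \<squnion> p y" "res z (p x) = x"
   "res z (rdiff (p y) (p x)) = res y (rdiff (p y) (p x))" shows "bu x y = z"
proof (rule EXT[of _ "p x" "rdiff (p y) (p x)"])
  show "p (bu x y) = p x \<squnion> rdiff (p y) (p x)" using bul[of x y] rd_sup[of "p x" "p y"] by simp
  show "p z = p x \<squnion> rdiff (p y) (p x)" using assms(1) rd_sup[of "p x" "p y"] by simp
  show "res (bu x y) (p x) = res z (p x)" using bul[of x y] assms(2) by simp
  show "res (bu x y) (rdiff (p y) (p x)) = res z (rdiff (p y) (p x))" using bul[of x y] assms(3) by simp
qed

lemma BABS: "p y \<le> p x \<Longrightarrow> bu x y = x"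
proof (rule BCHAR)
  assume a: "p y \<le> p x"
  show "p x = p x \<squnion> p y" using a by (simp add: sup_absorb1)
  show "res x (p x) = x" by simp
  have "rdiff (p y) (p x) = bot"
  proof -
    have "rdiff (p y) (p x) \<le> p x" using rd_le[of "p y" "p x"] a by (rule order_trans)
    then have "rdiff (p y) (p x) = rdiff (p y) (p x) \<sqinter> p x" by (simp add: inf.absorb1)
    then show ?thesis using rd_disj2[of "p y" "p x"] by simp
  qed
  then show "res x (rdiff (p y) (p x)) = res y (rdiff (p y) (p x))" by (simp add: res_bot)
qed

lemma BLE: "psle p res a b \<Longrightarrow> bu a b = b"
  by (rule BCHAR) (simp_all add: psle_def sup_absorb2)



lemma lat1: "(d::'b) \<le> a \<squnion> b \<Longrightarrow> d \<sqinter> a = bot \<Longrightarrow> d \<le> b"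
proof -
  assume h: "d \<le> a \<squnion> b" "d \<sqinter> a = bot"
  have "d = d \<sqinter> (a \<squnion> b)" using h by (simp add: inf.absorb1)
  also have "\<dots> = (d \<sqinter> a) \<squnion> (d \<sqinter> b)" by (simp add: inf_sup_distrib1)
  also have "\<dots> = d \<sqinter> b" using h by simp
  finally show ?thesis by (rule inf.orderI)
qed

lemma lat2: "(d::'b) \<sqinter> a = bot \<Longrightarrow> d \<sqinter> b = bot \<Longrightarrow> d \<sqinter> (a \<squnion> b) = bot"
  by (simp add: inf_sup_distrib1)

lemma lat3: "(d::'b) \<le> c \<Longrightarrow> c \<sqinter> a = bot \<Longrightarrow> d \<sqinter> a = bot"
proof -
  assume h: "d \<le> c" "c \<sqinter> a = bot"
  have "d \<sqinter> a \<le> c \<sqinter> a" using h(1) by (rule inf_mono) simp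
  then show ?thesis using h(2) by (simp add: bot_unique)
qed

lemma ci_band: "band ci"
  unfolding band_def
proof (intro conjI allI)
  fix x y z
  have "ci (ci x y) z = res z (p x \<sqinter> p y \<sqinter> p z)" by (simp add: ci_def' p_ci)
  moreover have "ci x (ci y z) = res z (p x \<sqinter> p y \<sqinter> p z)"
  proof -
    have "ci x (ci y z) = res (res z (p y \<sqinter> p z)) (p x \<sqinter> (p y \<sqinter> p z))" by (simp add: ci_def' p_ci)
    also have "\<dots> = res z (p x \<sqinter> (p y \<sqinter> p z))" by (rule R3[OF inf_le2]) simp
    finally show ?thesis by (simp add: inf_assoc)
  qed
  ultimately show "ci (ci x y) z = ci x (ci y z)" by simp
  show "ci x x = x" by (simp add: ci_def')
qed

lemma bu_idem: "bu x x = x"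
  by (rule BABS) simp

lemma bu_assoc: "bu (bu x y) z = bu x (bu y z)"
proof (rule sym, rule BCHAR)
  let ?L = "bu (bu x y) z"
  have pxy: "p (bu x y) = p x \<squnion> p y" using bul by simp
  have pyz: "p (bu y z) = p y \<squnion> p z" using bul by simp
  have pL: "p ?L = p x \<squnion> p y \<squnion> p z" using bul pxy by simp
  show "p ?L = p x \<squnion> p (bu y z)" using pL pyz by (simp add: sup_assoc)
  have "res ?L (p x) = res (bu x y) (p x)" by (rule B1) (simp add: pxy)
  then show "res ?L (p x) = x" using bul by simp
  define d where "d = rdiff (p (bu y z)) (p x)"
  have d1: "d \<le> p y \<squnion> p z" unfolding d_def using rd_le pyz by metis
  have d2: "d \<sqinter> p x = bot" unfolding d_def by (rule rd_disj2)
  have dL: "d \<le> p ?L" using d1 pL by (simp add: sup_assoc le_supI2)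
  have dR: "d \<le> p (bu y z)" using d1 pyz by simp
  define e1 where "e1 = d \<sqinter> p y"
  define e2 where "e2 = rdiff d (p y)"
  have de: "d = e1 \<squnion> e2" unfolding e1_def e2_def using rd[of d "p y"] by simp
  have e1d: "e1 \<le> d" and e2d: "e2 \<le> d" using de by auto
  have e1y: "e1 \<le> p y" unfolding e1_def by simp
  have e1x: "e1 \<sqinter> p x = bot" using lat3[OF e1d d2] .
  have e2y: "e2 \<sqinter> p y = bot" unfolding e2_def by (rule rd_disj2)
  have e2z: "e2 \<le> p z" using lat1[OF order_trans[OF e2d d1] e2y] .
  have e2x: "e2 \<sqinter> p x = bot" using lat3[OF e2d d2] .
  show "res ?L d = res (bu y z) d"
  proof (rule EXT[of _ e1 e2])
    show "p (res ?L d) = e1 \<squnion> e2" using R1[OF dL] de by simp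
    show "p (res (bu y z) d) = e1 \<squnion> e2" using R1[OF dR] de by simp
    have "res (res ?L d) e1 = res ?L e1" by (rule R3[OF e1d dL])
    also have "\<dots> = res (bu x y) e1" by (rule B1) (use e1y pxy in \<open>auto intro: le_supI2\<close>)
    also have "\<dots> = res y e1" by (rule B2[OF e1y e1x])
    also have "\<dots> = res (bu y z) e1" by (rule B1[symmetric, OF e1y])
    also have "\<dots> = res (res (bu y z) d) e1" by (rule R3[symmetric, OF e1d dR])
    finally show "res (res ?L d) e1 = res (res (bu y z) d) e1" .
    have "res (res ?L d) e2 = res ?L e2" by (rule R3[OF e2d dL])
    also have "\<dots> = res z e2" by (rule B2[OF e2z]) (use e2x e2y pxy lat2 in auto)
    also have "\<dots> = res (bu y z) e2" by (rule B2[symmetric, OF e2z e2y])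
    also have "\<dots> = res (res (bu y z) d) e2" by (rule R3[symmetric, OF e2d dR])
    finally show "res (res ?L d) e2 = res (res (bu y z) d) e2" .
  qed
qed

lemma sb3: "bu x y = bu y x \<longleftrightarrow> ci x y = ci y x"
proof
  assume h: "bu x y = bu y x"
  let ?z = "bu x y"
  have pz: "p ?z = p x \<squnion> p y" using bul by simp
  have zx: "res ?z (p x) = x" using bul by simp
  have zy: "res ?z (p y) = y" using bul[of y x] h by simp
  have "res y (p x \<sqinter> p y) = res ?z (p x \<sqinter> p y)"
    using R3[of "p x \<sqinter> p y" "p y" ?z] zy pz by (auto intro: le_supI2)
  also have "\<dots> = res x (p x \<sqinter> p y)"
    using R3[of "p x \<sqinter> p y" "p x" ?z] zx pz by auto
  finally show "ci x y = ci y x" by (simp add: ci_def' inf_commute)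
next
  assume h0: "ci x y = ci y x"
  then have h: "res y (p y \<sqinter> p x) = res x (p y \<sqinter> p x)" by (simp add: ci_def' inf_commute)
  let ?z = "bu x y"
  have pz: "p ?z = p x \<squnion> p y" using bul by simp
  have yz: "p y \<le> p ?z" using pz by simp
  have zy: "res ?z (p y) = y"
  proof (rule EXT[of _ "p y \<sqinter> p x" "rdiff (p y) (p x)"])
    show "p (res ?z (p y)) = p y \<sqinter> p x \<squnion> rdiff (p y) (p x)" using R1[OF yz] rd by simp
    show "p y = p y \<sqinter> p x \<squnion> rdiff (p y) (p x)" using rd by simp
    have "res (res ?z (p y)) (p y \<sqinter> p x) = res ?z (p y \<sqinter> p x)" by (rule R3[OF _ yz]) simp
    also have "\<dots> = res x (p y \<sqinter> p x)" by (rule B1) simp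
    finally show "res (res ?z (p y)) (p y \<sqinter> p x) = res y (p y \<sqinter> p x)" using h by simp
    have "res (res ?z (p y)) (rdiff (p y) (p x)) = res ?z (rdiff (p y) (p x))" by (rule R3[OF rd_le yz])
    then show "res (res ?z (p y)) (rdiff (p y) (p x)) = res y (rdiff (p y) (p x))" using bul by simp
  qed
  have "bu y x = ?z"
  proof (rule BCHAR)
    show "p ?z = p y \<squnion> p x" using pz by (simp add: sup_commute)
    show "res ?z (p y) = y" by (rule zy)
    show "res ?z (rdiff (p x) (p y)) = res x (rdiff (p x) (p y))" by (rule B1[OF rd_le])
  qed
  then show "bu x y = bu y x" by simp
qed

lemma sb5: "boolean_algebra_on {ci (ci x s) x | s. True} ci bu"
proof -
  have S: "{ci (ci x s) x | s. True} = res x ` {e. e \<le> p x}"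
  proof (rule set_eqI, rule iffI)
    fix a assume "a \<in> {ci (ci x s) x | s. True}"
    then obtain s where "a = ci (ci x s) x" by blast
    then have "a = res x (p x \<sqinter> p s)" by (simp add: ci_def' p_ci inf_commute inf_left_commute)
    then show "a \<in> res x ` {e. e \<le> p x}" by auto
  next
    fix a assume "a \<in> res x ` {e. e \<le> p x}"
    then obtain e where e: "e \<le> p x" "a = res x e" by blast
    obtain s where s: "e = p s" using SU by (metis surjD)
    have "ci (ci x s) x = res x (p x \<sqinter> p s)" by (simp add: ci_def' p_ci inf_commute inf_left_commute)
    also have "\<dots> = a" using e s by (simp add: inf.absorb2)
    finally show "a \<in> {ci (ci x s) x | s. True}" by (metis (mono_tags, lifting) mem_Collect_eq)
  qed
  show ?thesis unfolding S
  proof (rule ba_interval)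
    fix e f assume ef: "e \<le> p x" "f \<le> p x"
    have "ci (res x e) (res x f) = res (res x f) (e \<sqinter> f)" by (simp add: ci_def' R1 ef)
    also have "\<dots> = res x (e \<sqinter> f)" by (rule R3) (auto simp: ef)
    finally show "ci (res x e) (res x f) = res x (e \<sqinter> f)" .
    have ef2: "e \<squnion> f \<le> p x" using ef by simp
    show "bu (res x e) (res x f) = res x (e \<squnion> f)"
    proof (rule BCHAR)
      show "p (res x (e \<squnion> f)) = p (res x e) \<squnion> p (res x f)" using ef ef2 by (simp add: R1)
      show "res (res x (e \<squnion> f)) (p (res x e)) = res x e" using ef ef2 by (simp add: R1 R3)
      have "res (res x (e \<squnion> f)) (rdiff f e) = res x (rdiff f e)"
        by (rule R3[OF _ ef2]) (meson order_trans rd_le sup_ge2)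
      also have "\<dots> = res (res x f) (rdiff f e)" by (rule R3[symmetric, OF rd_le ef(2)])
      finally show "res (res x (e \<squnion> f)) (rdiff (p (res x f)) (p (res x e))) =
          res (res x f) (rdiff (p (res x f)) (p (res x e)))" using ef by (simp add: R1)
    qed
  next
    fix e assume e: "e \<le> p x"
    show "\<exists>g\<le>p x. e \<sqinter> g = bot \<and> e \<squnion> g = p x"
    proof (intro exI conjI)
      show "rdiff (p x) e \<le> p x" by (rule rd_le)
      show "e \<sqinter> rdiff (p x) e = bot" by (rule rd_disj)
      show "e \<squnion> rdiff (p x) e = p x" using rd_sup[of e "p x"] e by (simp add: sup_absorb2)
    qed
  qed
qed

lemma main: "rh_skew_boolean_algebra ci bu"
  unfolding rh_skew_boolean_algebra_def
proof (intro conjI allI)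
  show "band ci" by (rule ci_band)
  show "band bu" unfolding band_def using bu_assoc bu_idem by simp
  fix x y
  show "ci x (bu x y) = x" using bul[of x y] by (simp add: ci_def' inf_sup_absorb)
  show "ci (bu y x) x = x" using bul[of y x] by (simp add: ci_def' inf_commute sup_commute)
  show "bu x (ci x y) = x" by (rule BABS) (simp add: p_ci)
  show "bu (ci y x) x = x" by (rule BLE) (simp add: ci_def' psle_res)
  show "ci (ci x y) x = ci y x" by (simp add: ci_def' p_ci inf_commute inf_left_commute)
  show "bu (bu x y) x = bu x y" by (rule BABS) (simp add: bul)
  show "(bu x y = bu y x) = (ci x y = ci y x)" by (rule sb3)
next
  obtain z where z: "p z = bot" using SU by (metis surjD)
  show "\<exists>z. \<forall>x. ci z x = z \<and> ci x z = z"
  proof (rule exI[of _ z], intro allI conjI)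
    fix x
    show "ci z x = z" by (rule bot_eq) (simp_all add: p_ci z)
    show "ci x z = z" by (rule bot_eq) (simp_all add: p_ci z)
  qed
next
  fix x show "boolean_algebra_on {ci (ci x s) x | s. True} ci bu" by (rule sb5)
qed

end

theorem proposition2p5:
  fixes p :: "'x \<Rightarrow> 'b::{distrib_lattice,bounded_lattice_bot}"
    and res :: "'x \<Rightarrow> 'b \<Rightarrow> 'x"
  assumes "boolean_set p res"
  shows "rh_skew_boolean_algebra (bs_circ p res) (bs_bullet p res)"
proof -
  interpret bs p res by (rule bs.intro) (rule assms)
  show ?thesis by (rule main)
qed

end
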